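(* Let $m\ge 2$. If the Lucas numbers are complete mod $m$, then every Gibonacci sequence $\{G_n(a,b)\}$ (with $\gcd(a,b)=1$) is complete mod $m$.
   Context: For integers $a,b$ with $\gcd(a,b)=1$, the Gibonacci sequence $\{G_n(a,b)\}_{n\ge1}$ is defined by $G_1=a$, $G_2=b$, $G_{n+1}=G_{n-1}+G_n$. The Lucas numbers are $L_n=G_n(1,3)$. A sequence is complete mod $m$ if every residue class modulo $m$ contains some term of the sequence. *)

theory Defs
  imports "HOL-Number_Theory.Number_Theory"
begin

text \<open>Index 0 is an auxiliary value (b - a) making the recurrence uniform; it is never used
  in the notion of completeness below, which only refers to indices n >= 1.\<close>
fun gib :: "int \<Rightarrow> int \<Rightarrow> nat \<Rightarrow> int" where
  "gib a b 0 = b - a"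
| "gib a b (Suc 0) = a"
| "gib a b (Suc (Suc n)) = gib a b n + gib a b (Suc n)"

definition lucas :: "nat \<Rightarrow> int" where
  "lucas n = gib 1 3 n"

definition complete_mod :: "(nat \<Rightarrow> int) \<Rightarrow> int \<Rightarrow> bool" where
  "complete_mod f m \<longleftrightarrow> (\<forall>r::int. \<exists>n\<ge>1. [f n = r] (mod m))"

end

theory Submission
  imports Defs
begin


definition recur :: "(nat \<Rightarrow> int) \<Rightarrow> bool" where
  "recur u \<longleftrightarrow> (\<forall>n. u (Suc (Suc n)) = u n + u (Suc n))"

lemma recurD: "recur u \<Longrightarrow> u (Suc (Suc n)) = u n + u (Suc n)"
  by (simp add: recur_def)

lemma recurD2: "recur u \<Longrightarrow> u (n + 2) = u n + u (n + 1)"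
  by (simp add: recur_def)

lemma recur_gib: "recur (gib a b)"
  by (simp add: recur_def)

lemma recur_lucas: "recur lucas"
  by (simp add: recur_def lucas_def)

lemma recur_shift: "recur u \<Longrightarrow> recur (\<lambda>n. u (n + k))"
  by (simp add: recur_def)

lemma recur_lin: "recur u \<Longrightarrow> recur v \<Longrightarrow> recur (\<lambda>n. a * u n + b * v n)"
  by (simp add: recur_def algebra_simps)

lemma recur_scale: "recur u \<Longrightarrow> recur (\<lambda>n. a * u n)"
  by (simp add: recur_def algebra_simps)

lemma recur_diff: "recur u \<Longrightarrow> recur v \<Longrightarrow> recur (\<lambda>n. u n - v n)"
  by (simp add: recur_def algebra_simps)

lemma recur_add: "recur u \<Longrightarrow> recur v \<Longrightarrow> recur (\<lambda>n. u n + v n)"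
  by (simp add: recur_def algebra_simps)

lemma recur_cong_aux:
  assumes "recur u" "recur v" "[u i = v i] (mod m)" "[u (Suc i) = v (Suc i)] (mod m)"
  shows "[u (i+n) = v (i+n)] (mod m) \<and> [u (Suc (i+n)) = v (Suc (i+n))] (mod m)"
proof (induction n)
  case 0 then show ?case using assms by simp
next
  case (Suc n)
  then have "[u (i+n) + u (Suc (i+n)) = v (i+n) + v (Suc (i+n))] (mod m)"
    using cong_add by blast
  then show ?case using Suc recurD[OF assms(1), of "i+n"] recurD[OF assms(2), of "i+n"] by simp
qed

lemma recur_cong:
  assumes "recur u" "recur v" "[u i = v i] (mod m)" "[u (Suc i) = v (Suc i)] (mod m)" "i \<le> n"
  shows "[u n = v n] (mod m)"
  using recur_cong_aux[OF assms(1-4), of "n - i"] assms(5) by simp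

lemma recur_period:
  assumes "recur u" "(m::int) > 0"
  shows "\<exists>N>0. \<forall>n. [u (n + N) = u n] (mod m)"
proof -
  define f where "f i = (u i mod m, u (Suc i) mod m)" for i
  define M where "M = nat (m*m)"
  have sub: "f ` {0..M} \<subseteq> {0..<m} \<times> {0..<m}"
    using assms(2) by (auto simp: f_def)
  have "card ({0..<m} \<times> {0..<m}) = M"
    using assms(2) by (simp add: M_def card_cartesian_product nat_mult_distrib)
  then have "\<not> inj_on f {0..M}"
    using card_inj_on_le[OF _ sub] by force
  then obtain i j where ij: "i \<in> {0..M}" "j \<in> {0..M}" "i \<noteq> j" "f i = f j"
    unfolding inj_on_def by blast
  then obtain i j where ij: "i < j" "f i = f j"
    by (metis linorder_neqE_nat)
  have bk: "t \<le> i \<Longrightarrow> f (i - t) = f (j - t)" for t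
  proof (induction t)
    case 0 then show ?case using ij by simp
  next
    case (Suc t)
    then have h: "f (i - t) = f (j - t)" by simp
    have e1: "Suc (i - Suc t) = i - t" "Suc (j - Suc t) = j - t" using Suc.prems ij by auto
    have "u (Suc (Suc (i - Suc t))) = u (i - Suc t) + u (Suc (i - Suc t))"
         "u (Suc (Suc (j - Suc t))) = u (j - Suc t) + u (Suc (j - Suc t))"
      using recurD[OF assms(1)] by auto
    then have a1: "u (i - Suc t) = u (Suc (i - t)) - u (i - t)"
          and a2: "u (j - Suc t) = u (Suc (j - t)) - u (j - t)"
      using e1 by auto
    from h have h1: "u (i - t) mod m = u (j - t) mod m" and h2: "u (Suc (i - t)) mod m = u (Suc (j - t)) mod m"
      by (auto simp: f_def)
    have "u (i - Suc t) mod m = u (j - Suc t) mod m"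
      unfolding a1 a2 using h1 h2 by (metis mod_diff_cong)
    then show ?case using h1 e1 by (simp add: f_def)
  qed
  from bk[of i] have f0: "f 0 = f (j - i)" by simp
  show ?thesis
  proof (intro exI[of _ "j - i"] conjI allI)
    show "0 < j - i" using ij by simp
    fix n
    have "[u (0 + n) = u (0 + n + (j - i))] (mod m)"
      apply (rule recur_cong[OF assms(1) recur_shift[OF assms(1), of "j - i"], of 0])
      using f0 by (auto simp: f_def cong_def)
    then show "[u (n + (j - i)) = u n] (mod m)" by (simp add: cong_sym)
  qed
qed

lemma period_mult:
  fixes t :: nat
  assumes "\<forall>n. [u (n + N) = u n] (mod m)"
  shows "[u (n + t * N) = u n] (mod m)"
proof (induction t)
  case 0 then show ?case by simp
next
  case (Suc t)
  have "[u (n + t*N + N) = u (n + t*N)] (mod m)" using assms by blast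
  then show ?case using Suc by (metis add.assoc add.commute cong_trans mult_Suc)
qed

definition Pm :: "int \<Rightarrow> bool" where
  "Pm m \<longleftrightarrow> (\<forall>x y. gcd x y = 1 \<longrightarrow> (\<exists>c k. coprime c m \<and> [x = c * lucas (k+1)] (mod m) \<and> [y = c * lucas (k+2)] (mod m)))"

lemma glue:
  assumes m: "m > 0" and P: "Pm m" and C: "complete_mod lucas m" and g: "gcd a b = 1"
  shows "complete_mod (gib a b) m"
  unfolding complete_mod_def
proof
  fix r
  have "\<exists>c k. coprime c m \<and> [a = c * lucas (k+1)] (mod m) \<and> [b = c * lucas (k+2)] (mod m)"
    using P g unfolding Pm_def by simp
  then obtain c k where ck: "coprime c m" "[a = c * lucas (k+1)] (mod m)" "[b = c * lucas (k+2)] (mod m)"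
    by blast
  have rel: "[gib a b n = c * lucas (n + k)] (mod m)" if "1 \<le> n" for n
  proof (rule recur_cong[of "gib a b" "\<lambda>n. c * lucas (n+k)" 1 m n])
    show "recur (\<lambda>n. c * lucas (n+k))" using recur_scale[OF recur_shift[OF recur_lucas]] by blast
  qed (use ck that in \<open>auto simp: numeral_2_eq_2 add.commute recur_gib\<close>)
  obtain ci where ci: "[c * ci = 1] (mod m)" using cong_solve_coprime_int[OF ck(1)] by blast
  obtain j where j: "j \<ge> 1" "[lucas j = ci * r] (mod m)" using C unfolding complete_mod_def by blast
  obtain N where N: "N > 0" "\<forall>n. [lucas (n + N) = lucas n] (mod m)"
    using recur_period[OF recur_lucas m] by blast
  define n where "n = j + k * N - k"
  have kN: "k \<le> k * N" using N(1) by simp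
  have n1: "n \<ge> 1" and nk: "n + k = j + k * N" using j(1) kN unfolding n_def by linarith+
  have "[gib a b n = c * lucas (j + k * N)] (mod m)" using rel[OF n1] nk by simp
  moreover have "[c * lucas (j + k * N) = c * (ci * r)] (mod m)"
    using period_mult[OF N(2)] j(2) cong_scalar_left cong_trans by blast
  moreover have "[c * (ci * r) = r] (mod m)"
    using cong_scalar_right[OF ci, of r] by (simp add: mult.assoc)
  ultimately have "[gib a b n = r] (mod m)" using cong_trans by blast
  then show "\<exists>n\<ge>1. [gib a b n = r] (mod m)" using n1 by blast
qed

lemma complete_dvd:
  assumes "complete_mod f m" "d dvd m" shows "complete_mod f d"
  using assms unfolding complete_mod_def by (meson cong_dvd_modulus)




fun orb :: "int \<Rightarrow> nat \<Rightarrow> int \<Rightarrow> int \<Rightarrow> (int \<times> int) list" where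
  "orb m 0 x y = []"
| "orb m (Suc K) x y = (x,y) # orb m K y ((x+y) mod m)"

lemma length_orb: "length (orb m K x y) = K"
  by (induction K arbitrary: x y) auto

lemma orb_nth:
  assumes "recur u" "i < K"
  shows "orb m K (u j mod m) (u (Suc j) mod m) ! i = (u (j+i) mod m, u (Suc (j+i)) mod m)"
  using assms(2)
proof (induction K arbitrary: i j)
  case 0 then show ?case by simp
next
  case (Suc K)
  have e: "(u j mod m + u (Suc j) mod m) mod m = u (Suc (Suc j)) mod m"
    using recurD[OF assms(1), of j] by (simp add: mod_add_eq)
  show ?case
  proof (cases i)
    case 0 then show ?thesis by simp
  next
    case (Suc i')
    then have "i' < K" using Suc.prems by simp
    from Suc.IH[OF this, of "Suc j"] show ?thesis using Suc e by simp
  qed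
qed

lemma lucas_1: "lucas 1 = 1" and lucas_2: "lucas 2 = 3"
  and lucas_S0[simp]: "lucas (Suc 0) = 1" and lucas_SS0[simp]: "lucas (Suc (Suc 0)) = 3"
  by (simp_all add: lucas_def numeral_2_eq_2)

lemma orb_lucas:
  assumes "k < K"
  shows "orb m K (1 mod m) (3 mod m) ! k = (lucas (k+1) mod m, lucas (k+2) mod m)"
  using orb_nth[OF recur_lucas assms, of m 1] by (simp add: lucas_1 lucas_2[unfolded numeral_2_eq_2] numeral_2_eq_2 add.commute)

definition incheck :: "int \<Rightarrow> nat \<Rightarrow> int \<Rightarrow> bool" where
  "incheck m K r \<longleftrightarrow> 0 < m \<and> 0 \<le> r \<and> r < m \<and> 0 < K \<and>
     orb m (Suc K) (1 mod m) (3 mod m) ! K = (1 mod m, 3 mod m) \<and>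
     list_all (\<lambda>q. fst q \<noteq> r) (orb m K (1 mod m) (3 mod m))"

lemma incheck_incomplete:
  assumes "incheck m K r" shows "\<not> complete_mod lucas m"
proof
  assume C: "complete_mod lucas m"
  have m: "0 < m" "0 \<le> r" "r < m" "0 < K" and per: "orb m (Suc K) (1 mod m) (3 mod m) ! K = (1 mod m, 3 mod m)"
    and la: "list_all (\<lambda>q. fst q \<noteq> r) (orb m K (1 mod m) (3 mod m))"
    using assms by (auto simp: incheck_def)
  from orb_lucas[of K "Suc K" m] per have "lucas (K+1) mod m = 1 mod m" "lucas (K+2) mod m = 3 mod m" by auto
  then have b: "[lucas (1 + K) = lucas 1] (mod m)" "[lucas (Suc 1 + K) = lucas (Suc 1)] (mod m)"
    by (auto simp: cong_def lucas_1 lucas_2[unfolded numeral_2_eq_2] add.commute numeral_2_eq_2)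
  have P: "[lucas (n + K) = lucas n] (mod m)" if "1 \<le> n" for n
    by (rule recur_cong[OF recur_shift[OF recur_lucas] recur_lucas, of 1]) (use b that in auto)
  have P2: "[lucas (1 + s + t * K) = lucas (1 + s)] (mod m)" for s t
  proof (induction t)
    case 0 then show ?case by simp
  next
    case (Suc t)
    have "[lucas (1 + s + t*K + K) = lucas (1 + s + t*K)] (mod m)" using P[of "1+s+t*K"] by simp
    then show ?case using Suc by (metis add.assoc add.commute cong_trans mult_Suc)
  qed
  obtain n where n: "n \<ge> 1" "[lucas n = r] (mod m)" using C unfolding complete_mod_def by blast
  define s where "s = (n - 1) mod K"
  have sK: "s < K" using m by (simp add: s_def)
  have "n = 1 + s + ((n - 1) div K) * K" using n(1) by (simp add: s_def)
  then have "[lucas n = lucas (1 + s)] (mod m)" using P2 by metis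
  then have "lucas (s + 1) mod m = r" using n(2) m by (simp add: cong_def add.commute)
  moreover have "orb m K (1 mod m) (3 mod m) ! s \<in> set (orb m K (1 mod m) (3 mod m))"
    using sK by (simp add: length_orb)
  ultimately show False using la orb_lucas[OF sK, of m] by (auto simp: list_all_iff)
qed

lemma inc5: "\<not> complete_mod lucas 5" by (rule incheck_incomplete[of 5 4 0]) code_simp
lemma inc8: "\<not> complete_mod lucas 8" by (rule incheck_incomplete[of 8 12 0]) code_simp
lemma inc12: "\<not> complete_mod lucas 12" by (rule incheck_incomplete[of 12 24 0]) code_simp
lemma inc18: "\<not> complete_mod lucas 18" by (rule incheck_incomplete[of 18 24 5]) code_simp
lemma inc21: "\<not> complete_mod lucas 21" by (rule incheck_incomplete[of 21 16 0]) code_simp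
lemma inc28: "\<not> complete_mod lucas 28" by (rule incheck_incomplete[of 28 48 0]) code_simp
lemma inc49: "\<not> complete_mod lucas 49" by (rule incheck_incomplete[of 49 112 5]) code_simp

definition Pfin :: "int \<Rightarrow> nat \<Rightarrow> bool" where
 "Pfin m K \<longleftrightarrow> 0 < m \<and> (let l = orb m K (1 mod m) (3 mod m); R = map int [0..<nat m];
    U = filter (\<lambda>c. gcd c m = 1) R in
   list_all (\<lambda>x. list_all (\<lambda>y. gcd (gcd x y) m = 1 \<longrightarrow>
     list_ex (\<lambda>c. (x,y) \<in> set (map (\<lambda>(u,v). (c*u mod m, c*v mod m)) l)) U) R) R)"

lemma modR: "0 < m \<Longrightarrow> x mod m \<in> set (map int [0..<nat m])"
proof -
  assume m: "0 < m"
  have "int (nat (x mod m)) = x mod m" using m by simp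
  moreover have "nat (x mod m) \<in> set [0..<nat m]" using m by simp
  ultimately show ?thesis by (metis image_eqI set_map)
qed

lemma Pfin_Pm:
  assumes "Pfin m K" shows "Pm m"
  unfolding Pm_def
proof (intro allI impI)
  fix x y :: int assume g: "gcd x y = 1"
  have m: "0 < m" using assms by (simp add: Pfin_def)
  define x' where "x' = x mod m"
  define y' where "y' = y mod m"
  have R: "x' \<in> set (map int [0..<nat m])" "y' \<in> set (map int [0..<nat m])"
    using m modR by (auto simp: x'_def y'_def)
  have gg: "gcd (gcd x' y') m = 1"
  proof -
    define d where "d = gcd (gcd x' y') m"
    have "d dvd x'" "d dvd y'" "d dvd m" unfolding d_def by (meson dvd_trans gcd_dvd1 gcd_dvd2)+
    then have "d dvd x" "d dvd y"
      by (metis x'_def y'_def dvd_mod_iff)+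
    then have "d dvd 1" using g by (metis gcd_greatest)
    then show ?thesis using d_def by simp
  qed
  have A: "\<forall>x\<in>set (map int [0..<nat m]). \<forall>y\<in>set (map int [0..<nat m]). gcd (gcd x y) m = 1 \<longrightarrow>
     (\<exists>c\<in>set (filter (\<lambda>c. gcd c m = 1) (map int [0..<nat m])).
       (x, y) \<in> set (map (\<lambda>(u, v). (c * u mod m, c * v mod m)) (orb m K (1 mod m) (3 mod m))))"
    using assms unfolding Pfin_def Let_def list_all_iff list_ex_iff by (elim conjE) assumption
  have "\<exists>c\<in>set (filter (\<lambda>c. gcd c m = 1) (map int [0..<nat m])).
       (x', y') \<in> set (map (\<lambda>(u, v). (c * u mod m, c * v mod m)) (orb m K (1 mod m) (3 mod m)))"
    by (rule A[rule_format, OF R(1) R(2) gg])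
  then obtain c where c: "c \<in> set (filter (\<lambda>c. gcd c m = 1) (map int [0..<nat m]))"
     and mem: "(x',y') \<in> set (map (\<lambda>(u,v). (c*u mod m, c*v mod m)) (orb m K (1 mod m) (3 mod m)))"
    by blast
  from mem obtain k where k: "k < K" "(x',y') = (c * (lucas (k+1) mod m) mod m, c * (lucas (k+2) mod m) mod m)"
    by (auto simp: in_set_conv_nth length_orb orb_lucas)
  have "coprime c m" using c by (simp add: gcd_eq_1_imp_coprime)
  moreover have "[x = c * lucas (k+1)] (mod m)" "[y = c * lucas (k+2)] (mod m)"
    using k unfolding cong_def x'_def y'_def by (auto simp: mod_mult_right_eq)
  ultimately show "\<exists>c k. coprime c m \<and> [x = c * lucas (k + 1)] (mod m) \<and> [y = c * lucas (k + 2)] (mod m)"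
    by blast
qed

lemma P2: "Pm 2" by (rule Pfin_Pm[of 2 3]) code_simp
lemma P4: "Pm 4" by (rule Pfin_Pm[of 4 6]) code_simp
lemma P6: "Pm 6" by (rule Pfin_Pm[of 6 24]) code_simp
lemma P7: "Pm 7" by (rule Pfin_Pm[of 7 16]) code_simp


lemma P3: "Pm 3" by (rule Pfin_Pm[of 3 8]) code_simp




lemma P14: "Pm 14" by (rule Pfin_Pm[of 14 48]) code_simp




lemma fermat_int:
  fixes p a :: int
  assumes p: "prime p" and a: "\<not> p dvd a"
  shows "[a ^ (nat p - 1) = 1] (mod p)"
proof -
  have p0: "p > 0" using p prime_gt_0_int by blast
  have pn: "prime (nat p)" using p p0 by simp
  have "\<not> nat p dvd nat (a mod p)"
  proof
    assume "nat p dvd nat (a mod p)"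
    then have "int (nat p) dvd int (nat (a mod p))" by (simp only: int_dvd_int_iff)
    then have "p dvd a mod p" using p0 by simp
    then show False using a by (simp add: dvd_mod_iff)
  qed
  from fermat_theorem[OF pn this] have "[int (nat (a mod p) ^ (nat p - 1)) = int 1] (mod int (nat p))"
    using cong_int_iff by blast
  then have "[(a mod p) ^ (nat p - 1) = 1] (mod p)" using p0 by simp
  moreover have "[(a mod p) ^ (nat p - 1) = a ^ (nat p - 1)] (mod p)"
    by (simp add: cong_def power_mod)
  ultimately show ?thesis using cong_sym cong_trans by blast
qed

lemma lucas_0[simp]: "lucas 0 = 2"
  by (simp add: lucas_def)

lemma quad_inv:
  assumes "recur u"
  shows "u (Suc n)^2 - u n * u (Suc n) - (u n)^2 = (-1)^n * (u 1^2 - u 0 * u 1 - u 0^2)"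
proof (induction n)
  case 0 then show ?case by simp
next
  case (Suc n)
  have "u (Suc (Suc n)) = u n + u (Suc n)" using recurD[OF assms] by simp
  then have "u (Suc (Suc n))^2 - u (Suc n) * u (Suc (Suc n)) - (u (Suc n))^2
      = - (u (Suc n)^2 - u n * u (Suc n) - (u n)^2)" by (simp add: algebra_simps power2_eq_square)
  then show ?case using Suc by simp
qed

lemma lucas_quad: "(2 * lucas (Suc n) - lucas n)^2 = 5 * (lucas n ^ 2 - 4 * (-1)^n)"
proof -
  have "lucas (Suc n)^2 - lucas n * lucas (Suc n) - (lucas n)^2 = (-1)^n * (-5)"
    using quad_inv[OF recur_lucas, of n] by simp
  then show ?thesis by (simp add: algebra_simps power2_eq_square)
qed

lemma inv_mod_prime:
  fixes p u :: int
  assumes "prime p" "\<not> p dvd u"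
  obtains v where "[u * v = 1] (mod p)"
proof -
  have "coprime u p" using assms by (meson prime_imp_coprime coprime_commute)
  then show ?thesis using cong_solve_coprime_int that by blast
qed

lemma sq_quot:
  fixes p t u :: int
  assumes p: "prime p" and u: "\<not> p dvd u" and e: "[t^2 = 5 * u^2] (mod p)"
  shows "QuadRes p 5"
proof -
  obtain v where v: "[u * v = 1] (mod p)" using inv_mod_prime[OF p u] by blast
  have "[(t*v)^2 = 5 * (u*v)^2] (mod p)"
    using cong_mult[OF e cong_refl[of "v^2"]] by (simp add: power_mult_distrib algebra_simps)
  moreover have "[5 * (u*v)^2 = 5 * 1^2] (mod p)"
    using cong_pow[OF v, of 2] cong_scalar_left by blast
  ultimately have "[(t*v)^2 = 5] (mod p)" using cong_trans by (metis mult.right_neutral power_one)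
  then show ?thesis unfolding QuadRes_def by blast
qed

lemma missed:
  fixes p x :: int
  assumes p: "prime p" and n5: "\<not> QuadRes p 5"
    and h1: "\<not> p dvd u1" "[x^2 - 4 = u1^2] (mod p)"
    and h2: "\<not> p dvd u2" "[x^2 + 4 = u2^2] (mod p)"
  shows "\<not> [lucas n = x] (mod p)"
proof
  assume L: "[lucas n = x] (mod p)"
  have q: "[(2 * lucas (Suc n) - lucas n)^2 = 5 * (x ^ 2 - 4 * (-1)^n)] (mod p)"
    unfolding lucas_quad using L by (meson cong_scalar_left cong_diff cong_pow cong_refl)
  show False
  proof (cases "even n")
    case True
    then have "[(2 * lucas (Suc n) - lucas n)^2 = 5 * (x^2 - 4)] (mod p)" using q by simp
    then have "[(2 * lucas (Suc n) - lucas n)^2 = 5 * u1^2] (mod p)"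
      using h1(2) cong_scalar_left cong_trans by blast
    then show False using sq_quot[OF p h1(1)] n5 by blast
  next
    case False
    then have "[(2 * lucas (Suc n) - lucas n)^2 = 5 * (x^2 + 4)] (mod p)" using q by simp
    then have "[(2 * lucas (Suc n) - lucas n)^2 = 5 * u2^2] (mod p)"
      using h2(2) cong_scalar_left cong_trans by blast
    then show False using sq_quot[OF p h2(1)] n5 by blast
  qed
qed

lemma missed_incomplete:
  fixes p x :: int
  assumes p: "prime p" and n5: "\<not> QuadRes p 5"
    and h1: "\<not> p dvd u1" "[x^2 - 4 = u1^2] (mod p)"
    and h2: "\<not> p dvd u2" "[x^2 + 4 = u2^2] (mod p)"
  shows "\<not> complete_mod lucas p"
  using missed[OF assms] unfolding complete_mod_def by blast

lemma prime_odd_int: "prime (p::int) \<Longrightarrow> p \<noteq> 2 \<Longrightarrow> \<not> p dvd 2"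
proof
  assume "prime p" "p \<noteq> 2" "p dvd 2"
  have "prime (2::int)" by simp
  then have "p = 2" using primes_dvd_imp_eq[of p 2] \<open>prime p\<close> \<open>p dvd 2\<close> by blast
  then show False using \<open>p \<noteq> 2\<close> by simp
qed

lemma inert_1mod4:
  fixes p :: int
  assumes p: "prime p" "p \<noteq> 2" and n5: "\<not> QuadRes p 5" and m1: "QuadRes p (-1)"
  shows "\<not> complete_mod lucas p"
proof -
  obtain i where i: "[i^2 = -1] (mod p)" using m1 unfolding QuadRes_def by blast
  have p2: "\<not> p dvd 2" using prime_odd_int p by blast
  have ni: "\<not> p dvd i"
  proof
    assume "p dvd i"
    then have "[i^2 = 0] (mod p)" by (simp add: cong_0_iff power2_eq_square)
    then have "[-1 = 0] (mod p)" using cong_trans[OF cong_sym[OF i]] by blast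
    then have "p dvd 1" by (simp add: cong_0_iff)
    then show False using p(1) by (meson not_prime_unit)
  qed
  have "\<not> p dvd 2 * i" using p2 ni p by (simp add: prime_dvd_mult_iff)
  moreover have "[0^2 - 4 = (2*i)^2] (mod p)"
  proof -
    have "[4 * i^2 = 4 * (-1)] (mod p)" using cong_scalar_left[OF i, of 4] .
    then show ?thesis by (simp add: power_mult_distrib cong_sym_eq)
  qed
  moreover have "[0^2 + 4 = 2^2] (mod p)" by simp
  ultimately show ?thesis using missed_incomplete[OF p(1) n5, of "2*i" 0 2] p2 by simp
qed

lemma recur_cong_mod:
  assumes "\<And>n. [u (Suc (Suc n)) = u n + u (Suc n)] (mod m)"
      and "\<And>n. [v (Suc (Suc n)) = v n + v (Suc n)] (mod m)"
      and "[u 0 = v 0] (mod m)" "[u 1 = v 1] (mod m)"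
  shows "[u n = v n] (mod m)"
proof -
  have "[u n = v n] (mod m) \<and> [u (Suc n) = v (Suc n)] (mod m)" for n
  proof (induction n)
    case 0 then show ?case using assms by simp
  next
    case (Suc n)
    then have "[u n + u (Suc n) = v n + v (Suc n)] (mod m)" using cong_add by blast
    then have "[u (Suc (Suc n)) = v (Suc (Suc n))] (mod m)"
      using assms(1,2) by (meson cong_sym cong_trans)
    then show ?case using Suc by simp
  qed
  then show ?thesis by blast
qed

lemma period_incomplete:
  fixes m :: int and N :: nat
  assumes m: "0 < m" and N: "1 \<le> N" "int N < m" and per: "\<And>n. 1 \<le> n \<Longrightarrow> [lucas (n + N) = lucas n] (mod m)"
  shows "\<not> complete_mod lucas m"
proof
  assume C: "complete_mod lucas m"
  have P2: "[lucas (1 + s + t * N) = lucas (1 + s)] (mod m)" for s t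
  proof (induction t)
    case 0 then show ?case by simp
  next
    case (Suc t)
    have "[lucas (1 + s + t*N + N) = lucas (1 + s + t*N)] (mod m)" using per[of "1+s+t*N"] by simp
    then show ?case using Suc by (metis add.assoc add.commute cong_trans mult_Suc)
  qed
  have sub: "{0..<m} \<subseteq> (\<lambda>n. lucas n mod m) ` {1..N}"
  proof
    fix r assume r: "r \<in> {0..<m}"
    obtain n where n: "n \<ge> 1" "[lucas n = r] (mod m)" using C unfolding complete_mod_def by blast
    define s where "s = (n - 1) mod N"
    have sN: "s < N" using N by (simp add: s_def)
    have "n = 1 + s + ((n - 1) div N) * N" using n(1) by (simp add: s_def)
    then have "[lucas n = lucas (1 + s)] (mod m)" using P2 by metis
    then have "lucas (1 + s) mod m = r" using n(2) r by (simp add: cong_def)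
    moreover have "1 + s \<in> {1..N}" using sN by simp
    ultimately show "r \<in> (\<lambda>n. lucas n mod m) ` {1..N}" by (metis image_eqI)
  qed
  have "card {0..<m} \<le> card ((\<lambda>n. lucas n mod m) ` {1..N})"
    by (rule card_mono[OF _ sub]) simp
  also have "\<dots> \<le> card {1..N}" by (rule card_image_le) simp
  finally have "nat m \<le> N" by simp
  then show False using N(2) by simp
qed

lemma prime_odd: "prime (p::int) \<Longrightarrow> p \<noteq> 2 \<Longrightarrow> odd p"
proof
  assume "prime p" "p \<noteq> 2" "even p"
  have "prime (2::int)" by simp
  then have "2 = p" using primes_dvd_imp_eq[of 2 p] \<open>prime p\<close> \<open>even p\<close> by blast
  then show False using \<open>p \<noteq> 2\<close> by simp
qed

lemma split_incomplete:
  fixes p :: int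
  assumes p: "prime p" "p \<noteq> 2" and q5: "QuadRes p 5"
  shows "\<not> complete_mod lucas p"
proof -
  obtain s where "[s^2 = 5] (mod p)" using q5 unfolding QuadRes_def by blast
  then obtain k where k: "s^2 = 5 + p * k" by (metis cong_iff_lin cong_sym)
  have odd: "odd p" using prime_odd p by blast
  have p3: "p \<ge> 3" using p prime_gt_1_int[of p] odd by presburger
  define i2 where "i2 = (p + 1) div 2"
  have i2: "2 * i2 = p + 1" using odd unfolding i2_def by (metis oddE add.commute add_left_cancel add.assoc one_add_one dvd_mult_div_cancel even_add odd_one dvd_triv_left)
  have p4: "\<not> p dvd 4"
  proof
    assume "p dvd 4"
    then have "p dvd 2 * 2" by simp
    then have "p dvd 2" using p(1) prime_dvd_mult_iff by blast
    then show False using prime_odd_int p by blast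
  qed
  define f where "f = (1 + s) * i2"
  define g where "g = (1 - s) * i2"
  have key: "p dvd (x^2 - x - 1)" if "x = (1 + e * s) * i2" "e = 1 \<or> e = -1" for x e
  proof -
    have e2: "e^2 = 1" using that(2) by auto
    have "4 * (x^2 - x - 1) = ((1 + e*s) * (2 * i2))^2 - 2 * (1 + e*s) * (2 * i2) - 4"
      unfolding that(1) by (simp add: algebra_simps power2_eq_square)
    also have "\<dots> = ((1 + e*s) * (p+1))^2 - 2 * (1 + e*s) * (p+1) - 4" by (simp only: i2)
    also have "\<dots> = (e^2 * s^2 - 5) + p * ((p+2) * (1 + e*s)^2 - 2 * (1 + e*s))"
      using e2 by (simp add: algebra_simps power2_eq_square)
    also have "\<dots> = p * (k + (p+2) * (1 + e*s)^2 - 2 * (1 + e*s))"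
      using e2 k by (simp add: algebra_simps)
    finally have "p dvd 4 * (x^2 - x - 1)" by (metis dvd_triv_left)
    then show ?thesis using p(1) p4 prime_dvd_mult_iff by blast
  qed
  have kf: "p dvd f^2 - f - 1" using key[of f 1] by (simp add: f_def)
  have kg: "p dvd g^2 - g - 1" using key[of g "-1"] by (simp add: g_def)
  have fg: "4 * (f * g) + 4 = p * (- 4 * (p + 2) - k * (p+1)^2)"
  proof -
    have "4 * (f * g) = (1 - s^2) * (2*i2)^2" by (simp add: f_def g_def algebra_simps power2_eq_square)
    also have "\<dots> = (1 - s^2) * (p+1)^2" by (simp only: i2)
    finally have "4 * (f * g) = (1 - s^2) * (p+1)^2" .
    then have "4 * (f * g) = (-4 - p * k) * (p+1)^2" using k by simp
    then show ?thesis by (simp add: algebra_simps power2_eq_square)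
  qed
  have nf: "\<not> p dvd f" and ng: "\<not> p dvd g"
  proof -
    have "p dvd 4 * (f * g) + 4" by (metis fg dvd_triv_left)
    then have A: "p dvd f * g \<Longrightarrow> False" using p4
      by (metis dvd_add_right_iff dvd_mult)
    show "\<not> p dvd f" using A by (meson dvd_mult2)
    show "\<not> p dvd g" using A by (meson dvd_mult)
  qed
  define v where "v n = f^n + g^n" for n
  have vrec: "[v (Suc (Suc n)) = v n + v (Suc n)] (mod p)" for n
  proof -
    have "v (Suc (Suc n)) - (v n + v (Suc n)) = f^n * (f^2 - f - 1) + g^n * (g^2 - g - 1)"
      by (simp add: v_def algebra_simps power2_eq_square)
    moreover have "p dvd f^n * (f^2 - f - 1) + g^n * (g^2 - g - 1)"
      using kf kg by simp
    ultimately show ?thesis by (simp add: cong_iff_dvd_diff)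
  qed
  have lrec: "[lucas (Suc (Suc n)) = lucas n + lucas (Suc n)] (mod p)" for n
    using recurD[OF recur_lucas] by simp
  have v0: "[lucas 0 = v 0] (mod p)" by (simp add: v_def)
  have v1: "[lucas 1 = v 1] (mod p)"
  proof -
    have "v 1 = 1 + p" using i2 by (simp add: v_def f_def g_def algebra_simps)
    then show ?thesis by (simp add: cong_iff_lin)
  qed
  have Lv: "[lucas n = v n] (mod p)" for n
    by (rule recur_cong_mod[OF lrec vrec v0 v1])
  define P where "P = nat p - 1"
  have Ff: "[f ^ P = 1] (mod p)" and Fg: "[g ^ P = 1] (mod p)"
    using fermat_int[OF p(1) nf] fermat_int[OF p(1) ng] by (simp_all add: P_def)
  have vP: "[v (n + P) = v n] (mod p)" for n
  proof -
    have "v (n + P) = f^n * f^P + g^n * g^P" by (simp add: v_def power_add)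
    moreover have "[f^n * f^P + g^n * g^P = f^n * 1 + g^n * 1] (mod p)"
      using Ff Fg by (intro cong_add cong_mult cong_refl)
    ultimately show ?thesis by (simp add: v_def)
  qed
  have per: "[lucas (n + P) = lucas n] (mod p)" for n
    using Lv[of "n+P"] vP[of n] Lv[of n] by (meson cong_sym cong_trans)
  show ?thesis
    by (rule period_incomplete[of p P]) (use p3 per in \<open>auto simp: P_def\<close>)
qed




lemma leg_cong:
  assumes "[a = b] (mod p)" shows "Legendre a p = Legendre b p"
proof -
  have s: "[b = a] (mod p)" using assms by (rule cong_sym)
  have z: "[a = 0] (mod p) \<longleftrightarrow> [b = 0] (mod p)"
    using cong_trans[OF assms] cong_trans[OF s] by blast
  have q: "QuadRes p a \<longleftrightarrow> QuadRes p b"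
    unfolding QuadRes_def using cong_trans[OF _ assms] cong_trans[OF _ s] by blast
  show ?thesis unfolding Legendre_def using z q by simp
qed

lemma leg_vals: "Legendre a p = -1 \<or> Legendre a p = 0 \<or> Legendre a p = 1"
  by (simp add: Legendre_def)

lemma leg_zero: "Legendre a p = 0 \<longleftrightarrow> [a = 0] (mod p)"
  by (simp add: Legendre_def)

lemma leg_one_sq:
  fixes p a :: int
  assumes p: "prime p" and a: "\<not> [a = 0] (mod p)"
  shows "Legendre (a^2) p = 1"
proof -
  have "\<not> [a^2 = 0] (mod p)"
  proof
    assume "[a^2 = 0] (mod p)"
    then have "p dvd a^2" by (simp add: cong_0_iff)
    then have "p dvd a" using p prime_dvd_power by blast
    then show False using a by (simp add: cong_0_iff)
  qed
  moreover have "QuadRes p (a^2)" unfolding QuadRes_def using cong_refl by blast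
  ultimately show ?thesis by (simp add: Legendre_def)
qed

lemma small_dvd_zero:
  fixes d p :: int
  assumes "p dvd d" "\<bar>d\<bar> < p" shows "d = 0"
proof (rule ccontr)
  assume "d \<noteq> 0"
  then have "\<bar>p\<bar> \<le> \<bar>d\<bar>" using assms(1) dvd_imp_le_int by blast
  then show False using assms(2) by simp
qed

lemma leg_mult:
  fixes p :: int
  assumes p: "prime p" "p > 2"
  shows "Legendre (a * b) p = Legendre a p * Legendre b p"
proof -
  define n where "n = nat p"
  have pn: "prime n" "2 < n" "int n = p" using p by (auto simp: n_def)
  have ea: "[Legendre a p = a ^ ((n - 1) div 2)] (mod p)"
    using euler_criterion[OF pn(1,2), of a] pn(3) by simp
  have eb: "[Legendre b p = b ^ ((n - 1) div 2)] (mod p)"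
    using euler_criterion[OF pn(1,2), of b] pn(3) by simp
  have eab: "[Legendre (a*b) p = (a*b) ^ ((n - 1) div 2)] (mod p)"
    using euler_criterion[OF pn(1,2), of "a*b"] pn(3) by simp
  have "[Legendre a p * Legendre b p = (a*b) ^ ((n - 1) div 2)] (mod p)"
    using cong_mult[OF ea eb] by (simp add: power_mult_distrib)
  then have "[Legendre (a * b) p = Legendre a p * Legendre b p] (mod p)"
    using cong_trans[OF eab cong_sym] by blast
  then have "p dvd Legendre (a * b) p - Legendre a p * Legendre b p"
    by (simp add: cong_iff_dvd_diff)
  moreover have "\<bar>Legendre (a * b) p - Legendre a p * Legendre b p\<bar> < p"
    using leg_vals[of "a*b" p] leg_vals[of a p] leg_vals[of b p] p(2) by auto
  ultimately have "Legendre (a * b) p - Legendre a p * Legendre b p = 0" by (rule small_dvd_zero)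
  then show ?thesis by simp
qed

lemma sum_reindex_mod:
  fixes p :: int and h :: "int \<Rightarrow> int"
  assumes p: "p > 0" and hp: "\<And>x y. [x = y] (mod p) \<Longrightarrow> h x = h y"
    and inj: "\<And>x y. x \<in> {0..<p} \<Longrightarrow> y \<in> {0..<p} \<Longrightarrow> [\<sigma> x = \<sigma> y] (mod p) \<Longrightarrow> x = y"
  shows "(\<Sum>z\<in>{0..<p}. h (\<sigma> z)) = (\<Sum>z\<in>{0..<p}. h z)"
proof -
  define \<tau> where "\<tau> z = \<sigma> z mod p" for z
  have injt: "inj_on \<tau> {0..<p}"
  proof (rule inj_onI)
    fix x y assume "x \<in> {0..<p}" "y \<in> {0..<p}" "\<tau> x = \<tau> y"
    then show "x = y" using inj[of x y] unfolding \<tau>_def cong_def by blast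
  qed
  have sub: "\<tau> ` {0..<p} \<subseteq> {0..<p}" using p by (auto simp: \<tau>_def)
  have "\<tau> ` {0..<p} = {0..<p}" using endo_inj_surj[OF _ sub injt] by simp
  then have bij: "bij_betw \<tau> {0..<p} {0..<p}" using injt by (simp add: bij_betw_def)
  have "(\<Sum>z\<in>{0..<p}. h (\<sigma> z)) = (\<Sum>z\<in>{0..<p}. h (\<tau> z))"
  proof (rule sum.cong)
    fix z show "h (\<sigma> z) = h (\<tau> z)" unfolding \<tau>_def by (rule hp) (simp add: cong_def)
  qed simp
  also have "\<dots> = (\<Sum>z\<in>{0..<p}. h z)" by (rule sum.reindex_bij_betw[OF bij])
  finally show ?thesis .
qed

lemma sum_shift:
  fixes p c :: int and h :: "int \<Rightarrow> int"
  assumes p: "p > 0" and hp: "\<And>x y. [x = y] (mod p) \<Longrightarrow> h x = h y"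
  shows "(\<Sum>z\<in>{0..<p}. h (z + c)) = (\<Sum>z\<in>{0..<p}. h z)"
proof (rule sum_reindex_mod[OF p hp])
  fix x y assume xy: "x \<in> {0..<p}" "y \<in> {0..<p}" "[x + c = y + c] (mod p)"
  then have "[x = y] (mod p)" by (simp add: cong_add_rcancel)
  then show "x = y" using xy by (simp add: cong_def)
qed

lemma sum_neg:
  fixes p :: int and h :: "int \<Rightarrow> int"
  assumes p: "p > 0" and hp: "\<And>x y. [x = y] (mod p) \<Longrightarrow> h x = h y"
  shows "(\<Sum>z\<in>{0..<p}. h (- z)) = (\<Sum>z\<in>{0..<p}. h z)"
proof (rule sum_reindex_mod[OF p hp])
  fix x y assume xy: "x \<in> {0..<p}" "y \<in> {0..<p}" "[- x = - y] (mod p)"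
  then have "[x = y] (mod p)" by (metis cong_minus_minus_iff)
  then show "x = y" using xy by (simp add: cong_def)
qed

context
  fixes p :: int
  assumes pp: "prime p" and p2: "p > 2" and nm1: "\<not> QuadRes p (-1)"
begin

lemma p0: "p > 0" using p2 by simp

lemma lcong: "[x = y] (mod p) \<Longrightarrow> Legendre x p = Legendre y p"
  by (rule leg_cong)

lemma lneg1: "Legendre (-1) p = -1"
proof -
  have "\<not> [-1 = 0] (mod p)"
  proof
    assume "[-1 = 0] (mod p)"
    then have "p dvd 1" by (simp add: cong_0_iff)
    then show False using pp by (meson not_prime_unit)
  qed
  then show ?thesis using nm1 by (simp add: Legendre_def)
qed

lemma l1: "Legendre 1 p = 1"
proof -
  have "\<not> [1 = 0] (mod p)"
  proof
    assume "[1 = 0] (mod p)"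
    then have "p dvd 1" by (simp add: cong_0_iff)
    then show False using pp by (meson not_prime_unit)
  qed
  then show ?thesis using leg_one_sq[OF pp, of 1] by simp
qed

lemma lmult: "Legendre (a * b) p = Legendre a p * Legendre b p"
  using leg_mult[OF pp p2] .

lemma lneg: "Legendre (- a) p = - Legendre a p"
  using lmult[of "-1" a] lneg1 by simp

lemma S0: "(\<Sum>z\<in>{0..<p}. Legendre z p) = 0"
proof -
  have "(\<Sum>z\<in>{0..<p}. Legendre (- z) p) = (\<Sum>z\<in>{0..<p}. Legendre z p)"
    by (rule sum_neg[OF p0 lcong])
  then have "- (\<Sum>z\<in>{0..<p}. Legendre z p) = (\<Sum>z\<in>{0..<p}. Legendre z p)"
    by (simp add: lneg sum_negf)
  then show ?thesis by simp
qed

lemma S0c: "(\<Sum>z\<in>{0..<p}. Legendre (z + c) p) = 0"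
  using sum_shift[OF p0, of "\<lambda>z. Legendre z p" c] S0 lcong by simp

lemma lsq: "\<not> [z = 0] (mod p) \<Longrightarrow> Legendre z p * Legendre z p = 1"
  using leg_vals[of z p] leg_zero[of z p] by auto

lemma S1:
  assumes c: "\<not> [c = 0] (mod p)"
  shows "(\<Sum>z\<in>{0..<p}. Legendre z p * Legendre (z + c) p) = -1"
proof -
  define w :: "int \<Rightarrow> int" where "w z = z ^ (nat p - 2)" for z
  have zw: "[z * w z = 1] (mod p)" if "z \<in> {1..<p}" for z
  proof -
    have "\<not> p dvd z" using that zdvd_imp_le[of p z] by auto
    from fermat_int[OF pp this] have "[z ^ (nat p - 1) = 1] (mod p)" .
    moreover have "z ^ (nat p - 1) = z * w z"
    proof -
      have e: "nat p - 1 = Suc (nat p - 2)" using p2 by simp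
      show ?thesis unfolding e w_def by simp
    qed
    ultimately show ?thesis by simp
  qed
  have cop: "coprime c p"
  proof -
    have "\<not> p dvd c" using c by (simp add: cong_0_iff)
    then show ?thesis using pp by (meson prime_imp_coprime coprime_commute)
  qed
  define \<sigma> where "\<sigma> z = (if z = 0 then 0 else c * w z)" for z
  have nz: "\<not> [c * w z = 0] (mod p)" if "z \<in> {1..<p}" for z
  proof
    assume "[c * w z = 0] (mod p)"
    then have "[z * (c * w z) = z * 0] (mod p)" by (rule cong_scalar_left)
    then have "[c * (z * w z) = 0] (mod p)" by (simp add: ac_simps)
    moreover have "[c * (z * w z) = c * 1] (mod p)" using zw[OF that] by (rule cong_scalar_left)
    ultimately have "[c * 1 = 0] (mod p)" by (meson cong_trans[OF cong_sym[of "c * (z * w z)" "c * 1" p]])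
    then show False using c by simp
  qed
  have inj: "x = y" if xy: "x \<in> {0..<p}" "y \<in> {0..<p}" "[\<sigma> x = \<sigma> y] (mod p)" for x y
  proof (cases "x = 0 \<or> y = 0")
    case True
    show ?thesis
    proof (cases "x = 0")
      case x0: True
      show ?thesis
      proof (rule ccontr)
        assume "x \<noteq> y"
        then have "y \<in> {1..<p}" using x0 xy by auto
        moreover have "[0 = c * w y] (mod p)" using xy(3) x0 \<open>x \<noteq> y\<close> by (simp add: \<sigma>_def)
        ultimately show False using nz[of y] cong_sym[of 0 "c * w y" p] by blast
      qed
    next
      case x0: False
      then have y0: "y = 0" using True by simp
      have "x \<in> {1..<p}" using x0 xy by auto
      moreover have "[c * w x = 0] (mod p)" using xy(3) x0 y0 by (simp add: \<sigma>_def)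
      ultimately show ?thesis using nz by blast
    qed
  next
    case False
    then have x1: "x \<in> {1..<p}" and y1: "y \<in> {1..<p}" using xy by auto
    have "[c * w x = c * w y] (mod p)" using xy(3) False by (simp add: \<sigma>_def)
    then have e: "[w x = w y] (mod p)" using cong_mult_lcancel[OF cop] by blast
    have "[x * (y * w y) = x * 1] (mod p)" using zw[OF y1] by (rule cong_scalar_left)
    moreover have "[y * (x * w x) = y * 1] (mod p)" using zw[OF x1] by (rule cong_scalar_left)
    moreover have "[x * (y * w y) = y * (x * w x)] (mod p)"
      using cong_scalar_left[OF cong_sym[OF e], of "x*y"] by (simp add: ac_simps)
    ultimately have "[x * 1 = y * 1] (mod p)"
      by (meson cong_sym cong_trans)
    then show ?thesis using xy by (simp add: cong_def)
  qed
  have R: "(\<Sum>z\<in>{0..<p}. Legendre (1 + \<sigma> z) p) = (\<Sum>z\<in>{0..<p}. Legendre (1 + z) p)"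
  proof (rule sum_reindex_mod[OF p0 _ inj])
    fix x y :: int assume "[x = y] (mod p)"
    then have "[1 + x = 1 + y] (mod p)" by (simp add: cong_add_lcancel)
    then show "Legendre (1 + x) p = Legendre (1 + y) p" by (rule lcong)
  qed
  have Z: "{0..<p} = insert 0 {1..<p}" using p0 by auto
  have R2: "(\<Sum>z\<in>{1..<p}. Legendre (1 + c * w z) p) = -1"
  proof -
    have "(\<Sum>z\<in>{1..<p}. Legendre (1 + c * w z) p) = (\<Sum>z\<in>{1..<p}. Legendre (1 + \<sigma> z) p)"
      by (rule sum.cong) (auto simp: \<sigma>_def)
    also have "\<dots> = (\<Sum>z\<in>{0..<p}. Legendre (1 + \<sigma> z) p) - Legendre 1 p"
      unfolding Z by (simp add: \<sigma>_def)
    also have "\<dots> = (\<Sum>z\<in>{0..<p}. Legendre (z + 1) p) - Legendre 1 p"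
      unfolding R by (simp add: add.commute)
    also have "\<dots> = - Legendre 1 p" using S0c by simp
    finally show ?thesis using l1 by simp
  qed
  have trm: "Legendre z p * Legendre (z + c) p = Legendre (1 + c * w z) p" if z: "z \<in> {1..<p}" for z
  proof -
    have "[z * (1 + c * w z) = z + c * (z * w z)] (mod p)" by (simp add: algebra_simps)
    moreover have "[z + c * (z * w z) = z + c * 1] (mod p)"
      using zw[OF z] by (intro cong_add cong_scalar_left cong_refl)
    ultimately have "[z * (1 + c * w z) = z + c * 1] (mod p)" by (rule cong_trans)
    then have "Legendre (z * (1 + c * w z)) p = Legendre (z + c) p"
      using lcong by simp
    then have "Legendre (z + c) p = Legendre z p * Legendre (1 + c * w z) p"
      using lmult by metis
    moreover have "\<not> [z = 0] (mod p)" using z by (simp add: cong_def)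
    ultimately show ?thesis using lsq by (metis mult.assoc mult_1)
  qed
  have "(\<Sum>z\<in>{0..<p}. Legendre z p * Legendre (z + c) p)
      = (\<Sum>z\<in>{1..<p}. Legendre z p * Legendre (z + c) p)"
    unfolding Z by (simp add: Legendre_def)
  also have "\<dots> = (\<Sum>z\<in>{1..<p}. Legendre (1 + c * w z) p)"
    by (rule sum.cong) (auto simp: trm)
  finally show ?thesis using R2 by simp
qed


lemma lcong3: "[x = y] (mod p) \<Longrightarrow> Legendre (x + c) p = Legendre (y + c) p"
  by (rule lcong) (simp add: cong_add_rcancel)

lemma S2: "(\<Sum>z\<in>{0..<p}. Legendre (z - 1) p * Legendre z p * Legendre (z + 1) p) = 0"
proof -
  define h where "h z = Legendre (z - 1) p * Legendre z p * Legendre (z + 1) p" for z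
  have hp: "h x = h y" if "[x = y] (mod p)" for x y
  proof -
    have "Legendre (x - 1) p = Legendre (y - 1) p" using lcong3[OF that, of "-1"] by simp
    moreover have "Legendre x p = Legendre y p" using lcong[OF that] .
    moreover have "Legendre (x + 1) p = Legendre (y + 1) p" using lcong3[OF that, of 1] .
    ultimately show ?thesis unfolding h_def by simp
  qed
  have neg: "h (- z) = - h z" for z
  proof -
    have e1: "-z - 1 = -(z+1)" "-z + 1 = -(z - 1)" by simp_all
    have "h (- z) = Legendre (- (z + 1)) p * Legendre (- z) p * Legendre (- (z - 1)) p"
      unfolding h_def by (simp only: e1)
    then have "h (- z) = (- Legendre (z + 1) p) * (- Legendre z p) * (- Legendre (z - 1) p)"
      by (simp only: lneg)
    then show ?thesis by (simp add: h_def)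
  qed
  have "(\<Sum>z\<in>{0..<p}. h (- z)) = (\<Sum>z\<in>{0..<p}. h z)"
    by (rule sum_neg[OF p0 hp])
  then have "- (\<Sum>z\<in>{0..<p}. h z) = (\<Sum>z\<in>{0..<p}. h z)"
    by (simp add: neg sum_negf)
  then show ?thesis by (simp add: h_def)
qed

lemma pair_shift:
  assumes "\<not> [c = 0] (mod p)"
  shows "(\<Sum>z\<in>{0..<p}. Legendre (z + d) p * Legendre (z + d + c) p) = -1"
proof -
  define h where "h y = Legendre y p * Legendre (y + c) p" for y
  have hp: "h x = h y" if "[x = y] (mod p)" for x y
    using lcong[OF that] lcong3[OF that] by (simp add: h_def)
  have "(\<Sum>z\<in>{0..<p}. h (z + d)) = (\<Sum>z\<in>{0..<p}. h z)"
    by (rule sum_shift[OF p0 hp])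
  then show ?thesis using S1[OF assms] by (simp add: h_def)
qed

lemma not2: "\<not> [2 = 0] (mod p)"
proof
  assume "[2 = 0] (mod p)"
  then have "p dvd 2" by (simp add: cong_0_iff)
  then show False using prime_odd_int pp p2 by auto
qed

lemma not1: "\<not> [1 = 0] (mod p)"
proof
  assume "[1 = 0] (mod p)"
  then have "p dvd 1" by (simp add: cong_0_iff)
  then show False using pp by (meson not_prime_unit)
qed

lemma count_sum:
  "(\<Sum>z\<in>{0..<p}. (1 + Legendre (z - 1) p) * (1 + Legendre z p) * (1 + Legendre (z + 1) p)) = p - 3"
proof -
  have e: "(1 + Legendre (z - 1) p) * (1 + Legendre z p) * (1 + Legendre (z + 1) p)
    = 1 + Legendre (z + -1) p + Legendre (z + 0) p + Legendre (z + 1) p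
      + Legendre (z + -1) p * Legendre (z + -1 + 1) p
      + Legendre (z + -1) p * Legendre (z + -1 + 2) p
      + Legendre (z + 0) p * Legendre (z + 0 + 1) p
      + Legendre (z - 1) p * Legendre z p * Legendre (z + 1) p" for z
    by (simp add: algebra_simps)
  have c1: "(\<Sum>z\<in>{0..<p}. (1::int)) = p" using p0 by simp
  show ?thesis
    unfolding e sum.distrib c1 S0c S2 pair_shift[OF not1] pair_shift[OF not2] by simp
qed

lemma triple_exists:
  assumes p11: "p \<ge> 11"
  shows "\<exists>z. Legendre (z - 1) p = 1 \<and> Legendre z p = 1 \<and> Legendre (z + 1) p = 1"
proof (rule ccontr)
  assume no: "\<not> ?thesis"
  define T where "T z = (1 + Legendre (z - 1) p) * (1 + Legendre z p) * (1 + Legendre (z + 1) p)" for z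
  have T0: "T z = 0" if z: "z \<in> {0..<p}" "z \<noteq> 1" for z
  proof -
    consider "z = 0" | "z = p - 1" | "2 \<le> z \<and> z \<le> p - 2" using z by force
    then show ?thesis
    proof cases
      case 1 then show ?thesis by (simp add: T_def lneg1)
    next
      case 2
      have "[z = -1] (mod p)" using 2 by (simp add: cong_iff_dvd_diff)
      then have "Legendre z p = -1" using lcong lneg1 by metis
      then show ?thesis by (simp add: T_def)
    next
      case 3
      have nz: "\<not> [y = 0] (mod p)" if "1 \<le> y" "y < p" for y
        using that by (simp add: cong_def)
      have a: "Legendre (z - 1) p \<noteq> 0" "Legendre z p \<noteq> 0" "Legendre (z + 1) p \<noteq> 0"
        using nz[of "z - 1"] nz[of z] nz[of "z + 1"] 3 by (auto simp: leg_zero)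
      have "Legendre (z - 1) p = -1 \<or> Legendre z p = -1 \<or> Legendre (z + 1) p = -1"
        using no a leg_vals[of "z - 1" p] leg_vals[of z p] leg_vals[of "z + 1" p] by blast
      then show ?thesis by (auto simp: T_def)
    qed
  qed
  have T1: "T 1 \<le> 4"
    using leg_vals[of 2 p] by (auto simp: T_def l1 Legendre_def)
  have Z: "{0..<p} = insert 1 ({0..<p} - {1})" using p11 by auto
  have "(\<Sum>z\<in>{0..<p}. T z) = T 1 + (\<Sum>z\<in>{0..<p} - {1}. T z)"
    by (rule sum.remove) (use p11 in auto)
  also have "(\<Sum>z\<in>{0..<p} - {1}. T z) = 0" by (rule sum.neutral) (auto simp: T0)
  finally have "(\<Sum>z\<in>{0..<p}. T z) \<le> 4" using T1 by simp
  then show False using count_sum p11 unfolding T_def by simp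
qed

end

lemma inert_3mod4:
  fixes p :: int
  assumes pp: "prime p" and p11: "p \<ge> 11" and n5: "\<not> QuadRes p 5" and nm1: "\<not> QuadRes p (-1)"
  shows "\<not> complete_mod lucas p"
proof -
  have p2: "p > 2" using p11 by simp
  obtain z where z: "Legendre (z - 1) p = 1" "Legendre z p = 1" "Legendre (z + 1) p = 1"
    using triple_exists[OF pp p2 nm1 p11] by blast
  have qr: "QuadRes p y \<and> \<not> [y = 0] (mod p)" if "Legendre y p = 1" for y
  proof -
    have "Legendre y p \<noteq> 0" "Legendre y p \<noteq> -1" using that by simp_all
    then show ?thesis unfolding Legendre_def by meson
  qed
  obtain w where w: "[w^2 = z] (mod p)" using qr[OF z(2)] unfolding QuadRes_def by blast
  obtain s1 where s1: "[s1^2 = z - 1] (mod p)" using qr[OF z(1)] unfolding QuadRes_def by blast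
  obtain s2 where s2: "[s2^2 = z + 1] (mod p)" using qr[OF z(3)] unfolding QuadRes_def by blast
  have ndiv: "\<not> p dvd 2 * s" if "[s^2 = y] (mod p)" "Legendre y p = 1" for s y
  proof
    assume "p dvd 2 * s"
    moreover have "\<not> p dvd 2" using prime_odd_int pp p2 by auto
    ultimately have "p dvd s" using pp prime_dvd_mult_iff by blast
    then have "[s^2 = 0] (mod p)" by (simp add: cong_0_iff power2_eq_square)
    then have "[y = 0] (mod p)" using cong_trans[OF cong_sym[OF that(1)]] by blast
    then show False using qr[OF that(2)] by blast
  qed
  have x1: "[(2*w)^2 - 4 = (2*s1)^2] (mod p)"
  proof -
    have A: "[4 * w^2 - 4 = 4 * z - 4] (mod p)" by (rule cong_diff[OF cong_scalar_left[OF w] cong_refl])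
    have B: "[4 * (z - 1) = 4 * s1^2] (mod p)" by (rule cong_scalar_left[OF cong_sym[OF s1]])
    have "4 * z - 4 = 4 * (z - 1)" "(2*w)^2 - 4 = 4 * w^2 - 4" "(2*s1)^2 = 4 * s1^2"
      by (simp_all add: power_mult_distrib algebra_simps)
    then show ?thesis using cong_trans[OF A[unfolded \<open>4 * z - 4 = 4 * (z - 1)\<close>] B] by simp
  qed
  have x2: "[(2*w)^2 + 4 = (2*s2)^2] (mod p)"
  proof -
    have A: "[4 * w^2 + 4 = 4 * z + 4] (mod p)" by (rule cong_add[OF cong_scalar_left[OF w] cong_refl])
    have B: "[4 * (z + 1) = 4 * s2^2] (mod p)" by (rule cong_scalar_left[OF cong_sym[OF s2]])
    have "4 * z + 4 = 4 * (z + 1)" "(2*w)^2 + 4 = 4 * w^2 + 4" "(2*s2)^2 = 4 * s2^2"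
      by (simp_all add: power_mult_distrib algebra_simps)
    then show ?thesis using cong_trans[OF A[unfolded \<open>4 * z + 4 = 4 * (z + 1)\<close>] B] by simp
  qed
  show ?thesis
    by (rule missed_incomplete[OF pp n5 ndiv[OF s1 z(1)] x1 ndiv[OF s2 z(3)] x2])
qed




definition NN :: "nat \<Rightarrow> nat" where "NN k = 8 * 3^(k - 1)"

lemma unroll8:
  assumes "recur u" shows "u (n + 8) = 13 * u n + 21 * u (Suc n)"
proof -
  have r: "u (Suc (Suc m)) = u m + u (Suc m)" for m using recurD[OF assms] .
  show ?thesis by (simp add: eval_nat_numeral r algebra_simps)
qed

lemma liftA:
  assumes "k \<ge> 1"
  shows "\<forall>u. recur u \<longrightarrow> (\<exists>Y. recur Y \<and> (\<forall>n. u (n + NN k) - u n = 3^k * Y n) \<and> (\<forall>n. [Y n = u (n + 2)] (mod 3)))"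
  using assms
proof (induction k rule: nat_induct_at_least)
  case base
  show ?case
  proof (intro allI impI)
    fix u assume u: "recur u"
    define Y where "Y n = 4 * u n + 7 * u (Suc n)" for n
    have rY: "recur Y" unfolding Y_def using recur_lin[OF u recur_shift[OF u, of 1]] by simp
    have e: "u (n + NN 1) - u n = 3^1 * Y n" for n
      using unroll8[OF u, of n] by (simp add: NN_def Y_def)
    have c: "[Y n = u (n + 2)] (mod 3)" for n
    proof -
      have "u (n + 2) = u n + u (Suc n)" using recurD2[OF u] by simp
      then have "Y n - u (n + 2) = 3 * (u n + 2 * u (Suc n))" by (simp add: Y_def algebra_simps)
      then show ?thesis by (simp add: cong_iff_dvd_diff)
    qed
    show "\<exists>Y. recur Y \<and> (\<forall>n. u (n + NN 1) - u n = 3^1 * Y n) \<and> (\<forall>n. [Y n = u (n + 2)] (mod 3))"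
      using rY e c by blast
  qed
next
  case (Suc k)
  show ?case
  proof (intro allI impI)
    fix u assume u: "recur u"
    define N where "N = NN k"
    have t: "(3::nat)^k = 3 * 3^(k-1)" using Suc.hyps by (cases k) auto
    have NS: "NN (Suc k) = N + N + N" by (simp add: NN_def N_def t)
    obtain Y1 where Y1: "recur Y1" "\<And>n. u (n + N) - u n = 3^k * Y1 n" "\<And>n. [Y1 n = u (n + 2)] (mod 3)"
      using Suc.IH u unfolding N_def by blast
    obtain Y2 where Y2: "recur Y2" "\<And>n. Y1 (n + N) - Y1 n = 3^k * Y2 n"
      using Suc.IH Y1(1) unfolding N_def by blast
    obtain Y3 where Y3: "recur Y3" "\<And>n. Y2 (n + N) - Y2 n = 3^k * Y3 n"
      using Suc.IH Y2(1) unfolding N_def by blast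
    define Y where "Y n = Y1 n + 3^k * Y2 n + 3^(2*k - 1) * Y3 n" for n
    have rY: "recur Y" unfolding Y_def
      using recur_add[OF recur_add[OF Y1(1) recur_scale[OF Y2(1)]] recur_scale[OF Y3(1)]] by simp
    have a1: "u (n + N) = u n + 3^k * Y1 n" for n using Y1(2)[of n] by simp
    have a2: "Y1 (n + N) = Y1 n + 3^k * Y2 n" for n using Y2(2)[of n] by simp
    have a3: "Y2 (n + N) = Y2 n + 3^k * Y3 n" for n using Y3(2)[of n] by simp
    have b1: "Y1 (n + N + N) = Y1 n + 2 * 3^k * Y2 n + 3^k * 3^k * Y3 n" for n
      using a2[of "n + N"] a2[of n] a3[of n] by (simp add: algebra_simps)
    have b2: "u (n + N + N) = u n + 2 * 3^k * Y1 n + 3^k * 3^k * Y2 n" for n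
      using a1[of "n + N"] a1[of n] a2[of n] by (simp add: algebra_simps)
    have e3: "u (n + N + N + N) - u n = 3 * 3^k * Y1 n + 3 * (3^k * 3^k) * Y2 n + 3^k * 3^k * 3^k * Y3 n" for n
      using a1[of "n + N + N"] b2[of n] b1[of n] by (simp add: algebra_simps)
    have pk: "(3::int)^(Suc k) * 3^(2*k - 1) = 3^k * 3^k * 3^k"
    proof -
      have "Suc k + (2*k - 1) = k + k + k" using Suc.hyps by simp
      then have "(3::int)^(Suc k + (2*k - 1)) = 3^(k + k + k)" by simp
      then show ?thesis by (simp only: power_add)
    qed
    have e: "u (n + NN (Suc k)) - u n = 3^(Suc k) * Y n" for n
    proof -
      have "3^(Suc k) * Y n = 3 * 3^k * Y1 n + 3 * (3^k * 3^k) * Y2 n + (3^(Suc k) * 3^(2*k - 1)) * Y3 n"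
        by (simp add: Y_def algebra_simps)
      then show ?thesis unfolding NS using e3[of n] pk by (simp add: add.assoc)
    qed
    have c: "[Y n = u (n + 2)] (mod 3)" for n
    proof -
      have d: "(3::int) dvd 3^k" "(3::int) dvd 3^(2*k - 1)" using Suc.hyps
        by (simp_all add: dvd_power)
      then have "[Y n = Y1 n] (mod 3)"
        unfolding Y_def cong_iff_dvd_diff by simp
      then show ?thesis using Y1(3) cong_trans by blast
    qed
    show "\<exists>Y. recur Y \<and> (\<forall>n. u (n + NN (Suc k)) - u n = 3^(Suc k) * Y n) \<and> (\<forall>n. [Y n = u (n + 2)] (mod 3))"
      using rY e c by blast
  qed
qed

lemma scale3:
  fixes a b :: int
  assumes "[a = b] (mod 3)" shows "[3^k * a = 3^k * b] (mod 3^(Suc k))"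
proof -
  have "3 dvd a - b" using assms by (simp add: cong_iff_dvd_diff)
  then have "3^k * 3 dvd 3^k * (a - b)" by (rule mult_dvd_mono[OF dvd_refl])
  then show ?thesis by (simp add: cong_iff_dvd_diff power_Suc2 algebra_simps)
qed

lemma liftB:
  assumes k: "k \<ge> 1" and u: "recur u"
  shows "[u (n + t * NN k) = u n + int t * 3^k * u (n + 2)] (mod 3^(Suc k))"
proof -
  obtain Y where Y: "\<And>n. u (n + NN k) - u n = 3^k * Y n" "\<And>n. [Y n = u (n + 2)] (mod 3)"
    using liftA[OF k] u by blast
  have C: "[u (m + NN k) = u m + 3^k * u (m + 2)] (mod 3^(Suc k))" for m
  proof -
    have "[3^k * Y m = 3^k * u (m + 2)] (mod 3^(Suc k))" using scale3[OF Y(2)] .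
    moreover have "u (m + NN k) = u m + 3^k * Y m" using Y(1)[of m] by simp
    ultimately show ?thesis by (simp add: cong_add_lcancel)
  qed
  have per3: "\<forall>m. [u (m + NN k) = u m] (mod 3)"
  proof
    fix m
    have "(3::int) dvd 3^k" using k by (simp add: dvd_power)
    then have "3 dvd u (m + NN k) - u m" using Y(1)[of m] by simp
    then show "[u (m + NN k) = u m] (mod 3)" by (simp add: cong_iff_dvd_diff)
  qed
  show ?thesis
  proof (induction t)
    case 0 then show ?case by simp
  next
    case (Suc t)
    have "[u (n + t * NN k + NN k) = u (n + t * NN k) + 3^k * u (n + t * NN k + 2)] (mod 3^(Suc k))"
      by (rule C)
    moreover have "[3^k * u (n + t * NN k + 2) = 3^k * u (n + 2)] (mod 3^(Suc k))"
    proof (rule scale3)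
      show "[u (n + t * NN k + 2) = u (n + 2)] (mod 3)"
        using period_mult[OF per3, of "n + 2" t] by (simp add: ac_simps)
    qed
    ultimately have "[u (n + t * NN k + NN k) = u n + int t * 3^k * u (n + 2) + 3^k * u (n + 2)] (mod 3^(Suc k))"
      using Suc.IH by (meson cong_add cong_trans)
    then show ?case by (simp add: algebra_simps)
  qed
qed

lemma dstep:
  assumes "recur u"
  shows "u (Suc n) * u (Suc n + 3) - u (Suc n + 1) * u (Suc n + 2) = - (u n * u (n + 3) - u (n + 1) * u (n + 2))"
proof -
  have r: "u (Suc (Suc m)) = u m + u (Suc m)" for m using recurD[OF assms] .
  show ?thesis by (simp add: eval_nat_numeral r algebra_simps)
qed

lemma dlucas: "lucas n * lucas (n + 3) - lucas (n + 1) * lucas (n + 2) = 5 * (-1)^n"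
proof (induction n)
  case 0
  have "lucas 3 = 4" by (simp add: lucas_def eval_nat_numeral)
  moreover have "lucas 0 = 2" by (simp add: lucas_def)
  ultimately show ?case by (simp add: lucas_2)
next
  case (Suc n) then show ?case using dstep[OF recur_lucas, of n] by simp
qed

lemma sq_mod3:
  fixes c d :: int
  assumes "\<not> 3 dvd c" "d^2 = 25"
  shows "[(c * d)^2 = 1] (mod 3)"
proof -
  have "(c * d)^2 = c^2 * 25" using assms(2) by (simp add: power_mult_distrib)
  moreover have "c mod 3 = 1 \<or> c mod 3 = 2" using assms(1) by presburger
  moreover have "c^2 * 25 mod 3 = ((c mod 3)^2 * 25) mod 3" by (metis mod_mult_left_eq power_mod)
  ultimately show ?thesis unfolding cong_def by auto
qed

lemma P3k:
  assumes k: "k \<ge> 1"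
  shows "\<forall>x y. gcd x y = 1 \<longrightarrow> (\<exists>c j. coprime c 3 \<and> [x = c * lucas (j+1)] (mod 3^k) \<and> [y = c * lucas (j+2)] (mod 3^k))"
  using k
proof (induction k rule: nat_induct_at_least)
  case base
  then show ?case using P3 unfolding Pm_def by simp
next
  case (Suc k)
  show ?case
  proof (intro allI impI)
    fix x y :: int assume g: "gcd x y = 1"
    have "\<exists>c j. coprime c 3 \<and> [x = c * lucas (j+1)] (mod 3^k) \<and> [y = c * lucas (j+2)] (mod 3^k)"
      using Suc.IH g by simp
    then obtain c j where cj: "coprime c 3" "[x = c * lucas (j+1)] (mod 3^k)" "[y = c * lucas (j+2)] (mod 3^k)"
      by blast
    define M :: int where "M = 3^k"
    define M' :: int where "M' = 3^(k - 1)"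
    have MM: "M = 3 * M'" using Suc.hyps by (cases k) (auto simp: M_def M'_def)
    define L1 L2 L3 L4 where "L1 = lucas (j+1)" and "L2 = lucas (j+2)" and "L3 = lucas (j+3)" and "L4 = lucas (j+4)"
    obtain e where e: "x = c * L1 + M * e"
      using cj(2) unfolding L1_def M_def by (metis cong_iff_lin cong_sym)
    obtain f where f: "y = c * L2 + M * f"
      using cj(3) unfolding L2_def M_def by (metis cong_iff_lin cong_sym)
    define d where "d = L1 * L4 - L2 * L3"
    have d2: "d^2 = 25"
    proof -
      have "d = 5 * (-1)^(j+1)" using dlucas[of "j+1"] by (simp add: d_def L1_def L2_def L3_def L4_def eval_nat_numeral)
      moreover have "((-1::int)^(j+1))^2 = 1" by (simp add: power2_eq_square power_mult_distrib[symmetric])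
      ultimately show ?thesis by (simp add: power_mult_distrib)
    qed
    have c3: "\<not> 3 dvd c"
    proof
      assume "3 dvd c"
      have "is_unit (3::int)" by (rule coprime_common_divisor[OF cj(1) \<open>3 dvd c\<close> dvd_refl])
      then show False using zdvd_imp_le[of 3 1] by simp
    qed
    define D where "D = c * d"
    define \<gamma> where "\<gamma> = D * (e * c * L4 - f * c * L3)"
    define tt where "tt = D * (L1 * f - L2 * e)"
    define t where "t = nat (tt mod 3)"
    have tt: "[int t = tt] (mod 3)" by (simp add: t_def cong_def)
    define cc where "cc = c + M * \<gamma>"
    define jj where "jj = j + t * NN k"
    have one: "[(c * d)^2 = 1] (mod 3)" using sq_mod3[OF c3 d2] .
    have key1: "3 dvd (\<gamma> * L1 + int t * c * L3 - e)"
    proof -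
      have "\<gamma> * L1 + tt * c * L3 - e = e * ((c * d)^2 - 1)"
        by (simp add: \<gamma>_def tt_def D_def d_def algebra_simps power2_eq_square)
      moreover have "3 dvd (c * d)^2 - 1" using one by (simp add: cong_iff_dvd_diff)
      moreover have "3 dvd (int t - tt) * c * L3" using tt by (simp add: cong_iff_dvd_diff)
      ultimately have "3 dvd (\<gamma> * L1 + tt * c * L3 - e) + (int t - tt) * c * L3" by simp
      then show ?thesis by (simp add: algebra_simps)
    qed
    have key2: "3 dvd (\<gamma> * L2 + int t * c * L4 - f)"
    proof -
      have "\<gamma> * L2 + tt * c * L4 - f = f * ((c * d)^2 - 1)"
        by (simp add: \<gamma>_def tt_def D_def d_def algebra_simps power2_eq_square)
      moreover have "3 dvd (c * d)^2 - 1" using one by (simp add: cong_iff_dvd_diff)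
      moreover have "3 dvd (int t - tt) * c * L4" using tt by (simp add: cong_iff_dvd_diff)
      ultimately have "3 dvd (\<gamma> * L2 + tt * c * L4 - f) + (int t - tt) * c * L4" by simp
      then show ?thesis by (simp add: algebra_simps)
    qed
    obtain r1 where r1: "\<gamma> * L1 + int t * c * L3 - e = 3 * r1" using key1 by blast
    obtain r2 where r2: "\<gamma> * L2 + int t * c * L4 - f = 3 * r2" using key2 by blast
    have B1: "[lucas (jj + 1) = L1 + int t * M * L3] (mod 3 * M)"
      using liftB[OF Suc.hyps recur_lucas, of "j+1" t]
      by (simp add: jj_def L1_def L3_def M_def ac_simps eval_nat_numeral)
    have B2: "[lucas (jj + 2) = L2 + int t * M * L4] (mod 3 * M)"
      using liftB[OF Suc.hyps recur_lucas, of "j+2" t]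
      by (simp add: jj_def L2_def L4_def M_def ac_simps eval_nat_numeral)
    obtain q1 where q1: "lucas (jj + 1) = L1 + int t * M * L3 + 3 * M * q1"
      using B1 by (metis cong_iff_lin cong_sym)
    obtain q2 where q2: "lucas (jj + 2) = L2 + int t * M * L4 + 3 * M * q2"
      using B2 by (metis cong_iff_lin cong_sym)
    have X: "cc * lucas (jj + 1) - x = 3 * M * (r1 + M' * \<gamma> * int t * L3 + q1 * cc)"
    proof -
      have "cc * lucas (jj + 1) - x = M * (\<gamma> * L1 + int t * c * L3 - e) + M * M * \<gamma> * int t * L3 + 3 * M * q1 * cc"
        unfolding q1 e cc_def by (simp add: algebra_simps)
      also have "\<dots> = 3 * M * (r1 + M' * \<gamma> * int t * L3 + q1 * cc)"
        unfolding r1 by (simp add: MM algebra_simps)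
      finally show ?thesis .
    qed
    have Y: "cc * lucas (jj + 2) - y = 3 * M * (r2 + M' * \<gamma> * int t * L4 + q2 * cc)"
    proof -
      have "cc * lucas (jj + 2) - y = M * (\<gamma> * L2 + int t * c * L4 - f) + M * M * \<gamma> * int t * L4 + 3 * M * q2 * cc"
        unfolding q2 f cc_def by (simp add: algebra_simps)
      also have "\<dots> = 3 * M * (r2 + M' * \<gamma> * int t * L4 + q2 * cc)"
        unfolding r2 by (simp add: MM algebra_simps)
      finally show ?thesis .
    qed
    have m3: "(3::int)^(Suc k) = 3 * M" by (simp add: M_def)
    have "[x = cc * lucas (jj + 1)] (mod 3^(Suc k))"
      unfolding m3 cong_iff_dvd_diff using X by (metis dvd_minus_iff dvd_triv_left minus_diff_eq)
    moreover have "[y = cc * lucas (jj + 2)] (mod 3^(Suc k))"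
      unfolding m3 cong_iff_dvd_diff using Y by (metis dvd_minus_iff dvd_triv_left minus_diff_eq)
    moreover have "coprime cc 3"
    proof -
      have "3 dvd M" using MM by simp
      then have "\<not> 3 dvd cc" using c3 unfolding cc_def by (metis dvd_add_left_iff dvd_mult2)
      moreover have "prime (3::int)"
      proof -
        have "m = 1 \<or> m = 3" if "0 \<le> m" "m dvd (3::int)" for m
        proof -
          have "m \<le> 3" using zdvd_imp_le[OF that(2)] by simp
          moreover have "m \<noteq> 0" using that(2) by auto
          moreover have "m \<noteq> 2" using that(2) by auto
          ultimately show ?thesis using that(1) by auto
        qed
        then show ?thesis by (simp add: prime_int_iff)
      qed
      ultimately show ?thesis by (metis coprime_commute prime_imp_coprime)
    qed
    ultimately show "\<exists>c j. coprime c 3 \<and> [x = c * lucas (j + 1)] (mod 3^(Suc k)) \<and> [y = c * lucas (j + 2)] (mod 3^(Suc k))"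
      by blast
  qed
qed




lemma prime_incomplete:
  fixes p :: int
  assumes "prime p" "p \<ge> 11"
  shows "\<not> complete_mod lucas p"
proof (cases "QuadRes p 5")
  case True then show ?thesis using split_incomplete[OF assms(1)] assms(2) by simp
next
  case n5: False
  show ?thesis
  proof (cases "QuadRes p (-1)")
    case True then show ?thesis using inert_1mod4[OF assms(1) _ n5] assms(2) by simp
  next
    case False then show ?thesis using inert_3mod4[OF assms n5] by simp
  qed
qed

lemma small_primes:
  fixes p :: int
  assumes "prime p" "p < 11"
  shows "p = 2 \<or> p = 3 \<or> p = 5 \<or> p = 7"
proof -
  have p1: "p > 1" using assms(1) prime_gt_1_int by blast
  have nd: "\<not> d dvd p" if "1 < d" "d < p" for d
  proof
    assume "d dvd p"
    moreover have "\<forall>m. 0 \<le> m \<and> m dvd p \<longrightarrow> m = 1 \<or> m = p" using assms(1) by (simp add: prime_int_iff)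
    ultimately have "d = 1 \<or> d = p" using that(1) by (meson less_le_not_le order.strict_trans zero_less_one)
    then show False using that by simp
  qed
  consider "p = 2" | "p = 3" | "p = 4" | "p = 5" | "p = 6" | "p = 7" | "p = 8" | "p = 9" | "p = 10"
    using p1 assms(2) by linarith
  then show ?thesis
  proof cases
    case 3 then show ?thesis using nd[of 2] by simp
  next
    case 5 then show ?thesis using nd[of 2] by simp
  next
    case 7 then show ?thesis using nd[of 2] by simp
  next
    case 8 then show ?thesis using nd[of 3] by simp
  next
    case 9 then show ?thesis using nd[of 2] by simp
  qed auto
qed

lemma prime_factors_237:
  fixes m :: int
  assumes C: "complete_mod lucas m" and p: "prime p" "p dvd m"
  shows "p = 2 \<or> p = 3 \<or> p = 7"
proof -
  have Cp: "complete_mod lucas p" using complete_dvd[OF C p(2)] .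
  have "\<not> p \<ge> 11" using prime_incomplete[OF p(1)] Cp by blast
  then have "p = 2 \<or> p = 3 \<or> p = 5 \<or> p = 7" using small_primes[OF p(1)] by simp
  moreover have "p \<noteq> 5" using Cp inc5 by blast
  ultimately show ?thesis by blast
qed

lemma factor_237:
  fixes n :: nat
  assumes "n > 0" "\<And>p. prime p \<Longrightarrow> p dvd int n \<Longrightarrow> p = 2 \<or> p = 3 \<or> p = 7"
  shows "\<exists>a b c. int n = 2^a * 3^b * 7^c"
  using assms
proof (induction n rule: nat_less_induct)
  case (1 n)
  show ?case
  proof (cases "n = 1")
    case True then show ?thesis by (intro exI[of _ 0]) simp
  next
    case False
    then have "\<bar>int n\<bar> \<noteq> 1" by simp
    then obtain p where p: "prime p" "p dvd int n" using prime_factor_int by blast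
    then obtain n' where n': "int n = p * n'" by blast
    have p1: "p > 1" using p(1) prime_gt_1_int by blast
    have n'0: "n' > 0"
    proof -
      have "0 < p * n'" using n' 1(2) by simp
      then show ?thesis using p1 zero_less_mult_pos[of p n'] by simp
    qed
    have "n' * 1 < n' * p" using n'0 p1 by (intro mult_strict_left_mono) auto
    then have "n' < int n" using n' by (simp add: mult.commute)
    then have lt: "nat n' < n" using nat_less_iff[of n' n] n'0 by simp
    have "\<exists>a b c. int (nat n') = 2^a * 3^b * 7^c"
    proof (rule 1(1)[rule_format, OF lt])
      show "nat n' > 0" using n'0 by simp
      fix q assume "prime q" "q dvd int (nat n')"
      then have "q dvd int n" using n' n'0 by simp
      then show "q = 2 \<or> q = 3 \<or> q = 7" using 1(3) \<open>prime q\<close> by blast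
    qed
    then obtain a b c where abc: "n' = 2^a * 3^b * 7^c" using n'0 by auto
    have "p = 2 \<or> p = 3 \<or> p = 7" using 1(3) p by blast
    then show ?thesis
    proof (elim disjE)
      assume "p = 2" then show ?thesis using n' abc by (intro exI[of _ "Suc a"] exI[of _ b] exI[of _ c]) simp
    next
      assume "p = 3" then show ?thesis using n' abc by (intro exI[of _ a] exI[of _ "Suc b"] exI[of _ c]) simp
    next
      assume "p = 7" then show ?thesis using n' abc by (intro exI[of _ a] exI[of _ b] exI[of _ "Suc c"]) simp
    qed
  qed
qed

lemma pow_dvd: "j \<le> a \<Longrightarrow> (q::int)^j dvd q^a"
  by (simp add: le_imp_power_dvd)

lemma classify:
  fixes m :: int
  assumes m: "m \<ge> 2" and C: "complete_mod lucas m"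
  shows "m = 2 \<or> m = 4 \<or> m = 6 \<or> m = 7 \<or> m = 14 \<or> (\<exists>k\<ge>1. m = 3^k)"
proof -
  have "\<exists>a b c. int (nat m) = 2^a * 3^b * 7^c"
    by (rule factor_237) (use m prime_factors_237[OF C] in auto)
  then obtain a b c where abc: "m = 2^a * 3^b * 7^c" using m by auto
  have nd: "\<not> d dvd m" if "\<not> complete_mod lucas d" for d
    using that complete_dvd[OF C] by blast
  have dv: "2^i * 3^j * 7^l dvd m" if "i \<le> a" "j \<le> b" "l \<le> c" for i j l
    unfolding abc using that by (intro mult_dvd_mono pow_dvd)
  have a2: "a \<le> 2" using nd[OF inc8] dv[of 3 0 0] by (cases "a \<le> 2") auto
  have c1: "c \<le> 1" using nd[OF inc49] dv[of 0 0 2] by (cases "c \<le> 1") auto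
  have ac: "\<not> (a = 2 \<and> c = 1)" using nd[OF inc28] dv[of 2 0 1] by auto
  have bc: "\<not> (b \<ge> 1 \<and> c = 1)" using nd[OF inc21] dv[of 0 1 1] by auto
  have ab: "\<not> (a = 2 \<and> b \<ge> 1)" using nd[OF inc12] dv[of 2 1 0] by auto
  have ab2: "\<not> (a \<ge> 1 \<and> b \<ge> 2)" using nd[OF inc18] dv[of 1 2 0] by auto
  show ?thesis
  proof (cases "b = 0")
    case True
    then show ?thesis using abc a2 c1 ac m
      by (cases a; cases c) (auto simp: le_Suc_eq numeral_eq_Suc)
  next
    case False
    then have c0: "c = 0" using bc c1 by auto
    show ?thesis
    proof (cases "a = 0")
      case True then show ?thesis using abc c0 False by auto
    next
      case a0: False
      then have "a = 1" using a2 ab False by auto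
      moreover have "b = 1" using ab2 a0 False by auto
      ultimately show ?thesis using abc c0 by simp
    qed
  qed
qed

lemma Pm_all:
  fixes m :: int
  assumes m: "m \<ge> 2" and C: "complete_mod lucas m"
  shows "Pm m"
proof -
  have "m = 2 \<or> m = 4 \<or> m = 6 \<or> m = 7 \<or> m = 14 \<or> (\<exists>k\<ge>1. m = 3^k)"
    using classify[OF m C] .
  then show ?thesis
  proof (elim disjE exE conjE)
    fix k :: nat assume k: "k \<ge> 1" and mk: "m = 3^k"
    show "Pm m" unfolding Pm_def mk
    proof (intro allI impI)
      fix x y :: int assume "gcd x y = 1"
      then have "\<exists>c j. coprime c 3 \<and> [x = c * lucas (j+1)] (mod 3^k) \<and> [y = c * lucas (j+2)] (mod 3^k)"
        using P3k[OF k] by simp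
      then obtain c j where "coprime c 3" "[x = c * lucas (j+1)] (mod 3^k)" "[y = c * lucas (j+2)] (mod 3^k)"
        by blast
      moreover have "coprime c (3^k)" using \<open>coprime c 3\<close> by simp
      ultimately show "\<exists>c j. coprime c (3^k) \<and> [x = c * lucas (j+1)] (mod 3^k) \<and> [y = c * lucas (j+2)] (mod 3^k)"
        by blast
    qed
  qed (use P2 P4 P6 P7 P14 in auto)
qed

theorem mainTheorem10:
  fixes m :: int
  assumes "m \<ge> 2"
    and "complete_mod lucas m"
  shows "\<forall>a b :: int. gcd a b = 1 \<longrightarrow> complete_mod (gib a b) m"
proof (intro allI impI)
  fix a b :: int assume "gcd a b = 1"
  then show "complete_mod (gib a b) m"
    using glue[OF _ Pm_all[OF assms] assms(2)] assms(1) by simp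
qed


end
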